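(* Let $X$ be an infinite h-homogeneous zero-dimensional compact Hausdorff space, $G=\mathrm{Homeo}(X)$, $k\ge1$ and $T\in\{1,-1\}^{S_k}$. Define $\phi_T:\Phi(X)\to\Omega_k$ by $\phi_T(c)(\beta)=T(\theta_\beta(c))$. Then $\phi_T$ is continuous and $G$-equivariant.
   Context: h-homogeneous: every nonempty clopen subset of $X$ is homeomorphic to $X$. $\Phi(X)\subset\mathrm{Exp}(\mathrm{Exp}(X))$ is the compact space of maximal chains of nonempty closed subsets of $X$ (Vietoris topologies), with $gc=\{gF:F\in c\}$. $\mathcal D_k$ is the set of ordered partitions $(B_1,\dots,B_k)$ of $X$ into $k$ nonempty clopen sets, with $G$ acting piecewise and $S_k$ acting by $\sigma(B_1,\dots,B_k)=(B_{\sigma(1)},\dots,B_{\sigma(k)})$. $\Omega_k=\{1,-1\}^{\mathcal D_k}$ with the product topology and $G$-action $(g\omega)(\beta)=\omega(g^{-1}\beta)$. For $c\in\Phi(X)$ and nonempty closed $D$, $D_c=\bigcap\{A\in c:A\cap D\ne\emptyset\}$; for $\beta\in\mathcal D_k$, $t^*_c(\beta)$ lists the pieces of $\beta$ in increasing order with respect to $B_i<_cB_j\iff (B_i)_c\subseteq(B_j)_c$, and $\theta_\beta(c)\in S_k$ is the unique permutation with $\theta_\beta(c)\beta=t^*_c(\beta)$. *)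

theory Defs
  imports "HOL-Analysis.Analysis" "HOL-Combinatorics.Permutations"
begin

definition h_homogeneous :: "'a topology \<Rightarrow> bool" where
  "h_homogeneous X \<longleftrightarrow>
     (\<forall>U. openin X U \<and> closedin X U \<and> U \<noteq> {} \<longrightarrow> subtopology X U homeomorphic_space X)"

definition Exp :: "'a topology \<Rightarrow> 'a set set" where
  "Exp X = {A. closedin X A \<and> A \<noteq> {}}"

definition vietoris :: "'a topology \<Rightarrow> 'a set topology" where
  "vietoris X = topology_generated_by
     ({{A \<in> Exp X. A \<subseteq> U} | U. openin X U} \<union> {{A \<in> Exp X. A \<inter> U \<noteq> {}} | U. openin X U})"

definition is_chain_Exp :: "'a topology \<Rightarrow> 'a set set \<Rightarrow> bool" where
  "is_chain_Exp X c \<longleftrightarrow> c \<subseteq> Exp X \<and> (\<forall>A\<in>c. \<forall>B\<in>c. A \<subseteq> B \<or> B \<subseteq> A)"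

definition Phi :: "'a topology \<Rightarrow> 'a set set set" where
  "Phi X = {c \<in> Exp (vietoris X). is_chain_Exp X c \<and>
             (\<forall>d. is_chain_Exp X d \<and> c \<subseteq> d \<longrightarrow> d = c)}"

definition Phi_top :: "'a topology \<Rightarrow> 'a set set topology" where
  "Phi_top X = subtopology (vietoris (vietoris X)) (Phi X)"

definition act_chain :: "('a \<Rightarrow> 'a) \<Rightarrow> 'a set set \<Rightarrow> 'a set set" where
  "act_chain g c = {g ` F | F. F \<in> c}"

text \<open>D_k: ordered partitions (B_1,...,B_k) of X into k nonempty clopen sets,
  represented as lists of length k (index i-1 holds B_i).\<close>
definition Dk :: "'a topology \<Rightarrow> nat \<Rightarrow> 'a set list set" where
  "Dk X k = {\<beta>. length \<beta> = k \<and>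
     (\<forall>i<k. openin X (\<beta>!i) \<and> closedin X (\<beta>!i) \<and> \<beta>!i \<noteq> {}) \<and>
     (\<forall>i<k. \<forall>j<k. i \<noteq> j \<longrightarrow> \<beta>!i \<inter> \<beta>!j = {}) \<and>
     \<Union>(set \<beta>) = topspace X}"

definition act_D :: "('a \<Rightarrow> 'a) \<Rightarrow> 'a set list \<Rightarrow> 'a set list" where
  "act_D g \<beta> = map (\<lambda>B. g ` B) \<beta>"

definition perm_act :: "(nat \<Rightarrow> nat) \<Rightarrow> 'a set list \<Rightarrow> 'a set list" where
  "perm_act \<sigma> \<beta> = map (\<lambda>i. \<beta> ! \<sigma> i) [0..<length \<beta>]"

definition Omega_top :: "'a topology \<Rightarrow> nat \<Rightarrow> ('a set list \<Rightarrow> int) topology" where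
  "Omega_top X k = product_topology (\<lambda>_. discrete_topology {1, -1}) (Dk X k)"

definition act_Omega :: "'a topology \<Rightarrow> nat \<Rightarrow> ('a \<Rightarrow> 'a) \<Rightarrow> ('a set list \<Rightarrow> int) \<Rightarrow> ('a set list \<Rightarrow> int)" where
  "act_Omega X k g \<omega> = restrict (\<lambda>\<beta>. \<omega> (act_D (inv_into (topspace X) g) \<beta>)) (Dk X k)"

definition Dc :: "'a set set \<Rightarrow> 'a set \<Rightarrow> 'a set" where
  "Dc c D = \<Inter>{A \<in> c. A \<inter> D \<noteq> {}}"

definition t_star :: "'a set set \<Rightarrow> 'a set list \<Rightarrow> 'a set list" where
  "t_star c \<beta> = (THE l. (\<exists>\<sigma>. \<sigma> permutes {..<length \<beta>} \<and> l = perm_act \<sigma> \<beta>) \<and>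
                        sorted_wrt (\<lambda>A B. Dc c A \<subseteq> Dc c B) l)"

definition theta :: "'a set list \<Rightarrow> 'a set set \<Rightarrow> (nat \<Rightarrow> nat)" where
  "theta \<beta> c = (THE \<sigma>. \<sigma> permutes {..<length \<beta>} \<and> perm_act \<sigma> \<beta> = t_star c \<beta>)"

definition phi_T :: "'a topology \<Rightarrow> nat \<Rightarrow> ((nat \<Rightarrow> nat) \<Rightarrow> int) \<Rightarrow> 'a set set \<Rightarrow> ('a set list \<Rightarrow> int)" where
  "phi_T X k T c = restrict (\<lambda>\<beta>. T (theta \<beta> c)) (Dk X k)"

end

theory Submission
  imports Defs "HOL-Combinatorics.List_Permutation"
begin

lemma Phi_D:
  assumes "c \<in> Phi X"
  shows "c \<subseteq> Exp X" "\<And>A B. A\<in>c \<Longrightarrow> B\<in>c \<Longrightarrow> A\<subseteq>B \<or> B\<subseteq>A"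
    "\<And>d. is_chain_Exp X d \<Longrightarrow> c \<subseteq> d \<Longrightarrow> d = c"
proof -
  have 1: "is_chain_Exp X c" "\<forall>d. is_chain_Exp X d \<and> c \<subseteq> d \<longrightarrow> d = c"
    using assms unfolding Phi_def by auto
  show "c \<subseteq> Exp X" using 1(1) unfolding is_chain_Exp_def by simp
  show "\<And>A B. A\<in>c \<Longrightarrow> B\<in>c \<Longrightarrow> A\<subseteq>B \<or> B\<subseteq>A" using 1(1) unfolding is_chain_Exp_def by simp
  show "\<And>d. is_chain_Exp X d \<Longrightarrow> c \<subseteq> d \<Longrightarrow> d = c" using 1(2) by simp
qed

lemma Phi_insert:
  assumes "c \<in> Phi X" "closedin X C" "C \<noteq> {}" "\<And>A. A\<in>c \<Longrightarrow> A\<subseteq>C \<or> C\<subseteq>A"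
  shows "C \<in> c"
proof -
  have "is_chain_Exp X (insert C c)"
    using Phi_D(1,2)[OF assms(1)] assms(2-4) unfolding is_chain_Exp_def Exp_def by blast
  then have "insert C c = c" using Phi_D(3)[OF assms(1)] by blast
  then show ?thesis by blast
qed

lemma Phi_top:
  assumes "c \<in> Phi X" "topspace X \<noteq> {}"
  shows "topspace X \<in> c"
  using Phi_insert[OF assms(1) closedin_topspace assms(2)] Phi_D(1)[OF assms(1)]
  unfolding Exp_def by (auto dest: closedin_subset)

lemma chain_min:
  assumes "finite F" "F \<noteq> {}" "\<And>A B. A\<in>F \<Longrightarrow> B\<in>F \<Longrightarrow> A\<subseteq>B \<or> B\<subseteq>(A::'a set)"
  shows "\<exists>m\<in>F. \<forall>A\<in>F. m \<subseteq> A"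
  using assms
proof (induction F rule: finite_ne_induct)
  case (singleton x)
  then show ?case by auto
next
  case (insert x F)
  then obtain m where m: "m\<in>F" "\<forall>A\<in>F. m \<subseteq> A" by blast
  show ?case
  proof (cases "x \<subseteq> m")
    case True then show ?thesis using m by blast
  next
    case False then have "m \<subseteq> x" using insert.prems m by blast
    then show ?thesis using m by blast
  qed
qed

lemma Dc_meets:
  assumes "compact_space X" "c \<subseteq> Exp X" "\<And>A B. A\<in>c \<Longrightarrow> B\<in>c \<Longrightarrow> A\<subseteq>B \<or> B\<subseteq>A"
    "topspace X \<in> c" "closedin X B" "B \<noteq> {}"
  shows "Dc c B \<inter> B \<noteq> {}" "closedin X (Dc c B)"
proof -
  define P where "P = {A\<in>c. A \<inter> B \<noteq> {}}"
  have tP: "topspace X \<in> P" using assms(4-6) closedin_subset unfolding P_def by fastforce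
  have clP: "\<And>A. A \<in> P \<Longrightarrow> closedin X A" using assms(2) unfolding P_def Exp_def by auto
  show "closedin X (Dc c B)" unfolding Dc_def P_def[symmetric]
    using tP clP by (intro closedin_Inter) auto
  define U where "U = (\<lambda>A. A \<inter> B) ` P"
  have "\<Inter>U \<noteq> {}"
  proof (rule assms(1)[unfolded compact_space_fip, rule_format], intro conjI allI impI ballI)
    fix C assume "C \<in> U" then show "closedin X C" unfolding U_def using clP assms(5) by auto
  next
    fix F assume F: "finite F \<and> F \<subseteq> U"
    then obtain F' where F': "F' \<subseteq> P" "finite F'" "F = (\<lambda>A. A \<inter> B) ` F'"
      unfolding U_def by (meson finite_subset_image)
    show "\<Inter>F \<noteq> {}"
    proof (cases "F' = {}")
      case True then show ?thesis using F' by auto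
    next
      case False
      obtain m where m: "m \<in> F'" "\<forall>A\<in>F'. m \<subseteq> A"
        using chain_min[OF F'(2) False] assms(3) F'(1) unfolding P_def by blast
      have "m \<inter> B \<subseteq> \<Inter>F" using m F'(3) by auto
      moreover have "m \<inter> B \<noteq> {}" using m F'(1) unfolding P_def by auto
      ultimately show ?thesis by auto
    qed
  qed
  moreover have "\<Inter>U = Dc c B \<inter> B" using tP unfolding U_def Dc_def P_def[symmetric] by auto
  ultimately show "Dc c B \<inter> B \<noteq> {}" by simp
qed

lemma Dc_le_iff:
  assumes "\<And>A B. A\<in>c \<Longrightarrow> B\<in>c \<Longrightarrow> A\<subseteq>B \<or> B\<subseteq>A" "Dc c B \<inter> B \<noteq> {}"
  shows "Dc c B \<subseteq> Dc c B' \<longleftrightarrow> \<not>(\<exists>A\<in>c. A \<inter> B' \<noteq> {} \<and> A \<inter> B = {})"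
proof
  assume le: "Dc c B \<subseteq> Dc c B'"
  show "\<not>(\<exists>A\<in>c. A \<inter> B' \<noteq> {} \<and> A \<inter> B = {})"
  proof
    assume "\<exists>A\<in>c. A \<inter> B' \<noteq> {} \<and> A \<inter> B = {}"
    then obtain A where A: "A\<in>c" "A \<inter> B' \<noteq> {}" "A \<inter> B = {}" by blast
    have "Dc c B' \<subseteq> A" using A unfolding Dc_def by blast
    moreover have "A \<subseteq> Dc c B"
      unfolding Dc_def
    proof (rule Inter_greatest)
      fix A' assume "A' \<in> {A \<in> c. A \<inter> B \<noteq> {}}"
      then show "A \<subseteq> A'" using assms(1)[of A A'] A by blast
    qed
    ultimately show False using le A(3) assms(2) by blast
  qed
next
  assume "\<not>(\<exists>A\<in>c. A \<inter> B' \<noteq> {} \<and> A \<inter> B = {})"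
  then show "Dc c B \<subseteq> Dc c B'" unfolding Dc_def by blast
qed

lemma Dc_linear:
  assumes "\<And>A B. A\<in>c \<Longrightarrow> B\<in>c \<Longrightarrow> A\<subseteq>B \<or> B\<subseteq>A"
  shows "Dc c B \<subseteq> Dc c B' \<or> Dc c B' \<subseteq> Dc c B"
proof (rule ccontr)
  assume "\<not> ?thesis"
  then obtain A1 A2 where "A1\<in>c" "A1 \<inter> B' \<noteq> {}" "A1 \<inter> B = {}" "A2\<in>c" "A2 \<inter> B \<noteq> {}" "A2 \<inter> B' = {}"
    unfolding Dc_def by blast
  then show False using assms[of A1 A2] by blast
qed

lemma Dc_distinct:
  assumes "c \<in> Phi X" "openin X B" "B \<inter> B' = {}" "Dc c B \<inter> B \<noteq> {}" "Dc c B' \<inter> B' \<noteq> {}"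
    "closedin X (Dc c B)"
  shows "Dc c B \<noteq> Dc c B'"
proof
  assume eq: "Dc c B = Dc c B'"
  define D where "D = Dc c B"
  obtain x y where xy: "x \<in> D" "x \<in> B" "y \<in> D" "y \<in> B'" using assms(4,5) eq unfolding D_def by blast
  define C where "C = D - B"
  have "C \<in> c"
  proof (rule Phi_insert[OF assms(1)])
    show "closedin X C" unfolding C_def D_def using assms(2,6) by (simp add: closedin_diff)
    show "C \<noteq> {}" using xy assms(3) unfolding C_def by blast
  next
    fix A assume A: "A \<in> c"
    show "A \<subseteq> C \<or> C \<subseteq> A"
    proof (cases "A \<inter> B = {}")
      case False then have "D \<subseteq> A" using A unfolding D_def Dc_def by blast
      then show ?thesis unfolding C_def by blast
    next
      case True
      have "A \<subseteq> D" unfolding D_def Dc_def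
      proof (rule Inter_greatest)
        fix A' assume "A' \<in> {A \<in> c. A \<inter> B \<noteq> {}}"
        then show "A \<subseteq> A'" using Phi_D(2)[OF assms(1), of A A'] A True by blast
      qed
      then show ?thesis using True unfolding C_def by blast
    qed
  qed
  moreover have "y \<in> C" using xy assms(3) unfolding C_def by blast
  ultimately have "Dc c B' \<subseteq> C" using xy unfolding Dc_def by blast
  then show False using xy eq unfolding C_def D_def by blast
qed


lemma perm_act_eq: "perm_act \<sigma> \<beta> = permute_list \<sigma> \<beta>"
  by (simp add: perm_act_def permute_list_def)

lemma sorted_unique:
  assumes "distinct l1" "distinct l2" "set l1 = set l2" "sorted_wrt R l1" "sorted_wrt R l2"
    "\<forall>a\<in>set l1. \<forall>b\<in>set l1. R a b \<and> R b a \<longrightarrow> a = b"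
  shows "l1 = l2"
  using assms
proof (induction l1 arbitrary: l2)
  case Nil then show ?case by simp
next
  case (Cons a l1)
  then obtain b l2' where l2: "l2 = b # l2'" by (cases l2) auto
  have "a = b"
  proof (rule ccontr)
    assume ne: "a \<noteq> b"
    have "a \<in> set l2'" using Cons.prems(3) l2 ne by auto
    then have "R b a" using Cons.prems(5) l2 by auto
    moreover have "b \<in> set l1" using Cons.prems(3) l2 ne by auto
    then have "R a b" using Cons.prems(4) by auto
    ultimately show False using Cons.prems(6) ne \<open>b \<in> set l1\<close> by auto
  qed
  moreover have s: "set l1 = set l2'" using Cons.prems(1-3) l2 \<open>a = b\<close> by auto
  moreover have "l1 = l2'"
    by (rule Cons.IH) (use Cons.prems l2 s in auto)
  ultimately show ?case using l2 by simp
qed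

lemma sorted_exists:
  assumes "\<forall>x\<in>set \<beta>. \<forall>y\<in>set \<beta>. f x \<subseteq> f y \<or> f y \<subseteq> (f x :: 'b set)"
  shows "\<exists>l. mset l = mset \<beta> \<and> sorted_wrt (\<lambda>A B. f A \<subseteq> f B) l"
proof -
  define r where "r x = card {y\<in>set \<beta>. f y \<subset> f x}" for x
  define l where "l = sort_key r \<beta>"
  have key: "f x \<subseteq> f y" if "x \<in> set \<beta>" "y \<in> set \<beta>" "r x \<le> r y" for x y
  proof (rule ccontr)
    assume "\<not> f x \<subseteq> f y"
    then have lt: "f y \<subset> f x" using assms that by blast
    have "{z\<in>set \<beta>. f z \<subset> f y} \<subset> {z\<in>set \<beta>. f z \<subset> f x}"
      using lt that(2) by auto
    then have "r y < r x" unfolding r_def by (intro psubset_card_mono) auto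
    then show False using that(3) by simp
  qed
  have "mset l = mset \<beta>" unfolding l_def by simp
  moreover have "sorted (map r l)" unfolding l_def by simp
  then have "sorted_wrt (\<lambda>x y. r x \<le> r y) l" by (simp add: sorted_wrt_map)
  then have "sorted_wrt (\<lambda>A B. f A \<subseteq> f B) l"
    by (rule sorted_wrt_mono_rel[rotated]) (use key \<open>mset l = mset \<beta>\<close> in \<open>metis set_mset_mset\<close>)
  ultimately show ?thesis by blast
qed

lemma perm_unique:
  assumes "distinct \<beta>" "\<sigma>1 permutes {..<length \<beta>}" "\<sigma>2 permutes {..<length \<beta>}"
    "permute_list \<sigma>1 \<beta> = permute_list \<sigma>2 \<beta>"
  shows "\<sigma>1 = \<sigma>2"
proof
  fix i show "\<sigma>1 i = \<sigma>2 i"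
  proof (cases "i < length \<beta>")
    case True
    have "\<beta> ! \<sigma>1 i = \<beta> ! \<sigma>2 i" using assms(4) permute_list_nth[OF assms(2) True]
      permute_list_nth[OF assms(3) True] by simp
    moreover have "\<sigma>1 i < length \<beta>" "\<sigma>2 i < length \<beta>"
      using permutes_in_image[OF assms(2)] permutes_in_image[OF assms(3)] True by auto
    ultimately show ?thesis using assms(1) nth_eq_iff_index_eq by blast
  next
    case False
    then show ?thesis using permutes_not_in[OF assms(2)] permutes_not_in[OF assms(3)] by auto
  qed
qed

lemma tstar_ex1:
  assumes "distinct \<beta>" "\<forall>x\<in>set \<beta>. \<forall>y\<in>set \<beta>. f x \<subseteq> f y \<or> f y \<subseteq> (f x :: 'b set)"
    "\<forall>x\<in>set \<beta>. \<forall>y\<in>set \<beta>. f x = f y \<longrightarrow> x = y"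
  shows "\<exists>!l. (\<exists>\<sigma>. \<sigma> permutes {..<length \<beta>} \<and> l = perm_act \<sigma> \<beta>) \<and> sorted_wrt (\<lambda>A B. f A \<subseteq> f B) l"
proof -
  obtain l where l: "mset l = mset \<beta>" "sorted_wrt (\<lambda>A B. f A \<subseteq> f B) l"
    using sorted_exists[OF assms(2)] by blast
  obtain p where p: "p permutes {..<length \<beta>}" "permute_list p \<beta> = l"
    using mset_eq_permutation[OF l(1)] by blast
  show ?thesis
  proof (rule ex1I[of _ l], intro conjI)
    show "\<exists>\<sigma>. \<sigma> permutes {..<length \<beta>} \<and> l = perm_act \<sigma> \<beta>" using p perm_act_eq by metis
    show "sorted_wrt (\<lambda>A B. f A \<subseteq> f B) l" by fact
  next
    fix l' assume l': "(\<exists>\<sigma>. \<sigma> permutes {..<length \<beta>} \<and> l' = perm_act \<sigma> \<beta>) \<and> sorted_wrt (\<lambda>A B. f A \<subseteq> f B) l'"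
    then obtain q where q: "q permutes {..<length \<beta>}" "l' = permute_list q \<beta>" using perm_act_eq by metis
    have ml': "mset l' = mset \<beta>" using q by simp
    show "l' = l"
    proof (rule sorted_unique)
      show "distinct l'" "distinct l" using ml' l(1) assms(1) by (metis mset_eq_imp_distinct_iff)+
      show "set l' = set l" using ml' l(1) by (metis set_mset_mset)
      show "sorted_wrt (\<lambda>A B. f A \<subseteq> f B) l'" using l' by simp
      show "sorted_wrt (\<lambda>A B. f A \<subseteq> f B) l" by fact
      show "\<forall>a\<in>set l'. \<forall>b\<in>set l'. f a \<subseteq> f b \<and> f b \<subseteq> f a \<longrightarrow> a = b"
        using assms(3) ml' by (metis set_mset_mset subset_antisym)
    qed
  qed
qed

lemma theta_props:
  assumes "distinct \<beta>" "\<forall>x\<in>set \<beta>. \<forall>y\<in>set \<beta>. Dc c x \<subseteq> Dc c y \<or> Dc c y \<subseteq> Dc c x"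
    "\<forall>x\<in>set \<beta>. \<forall>y\<in>set \<beta>. Dc c x = Dc c y \<longrightarrow> x = y"
  shows "theta \<beta> c permutes {..<length \<beta>}" "perm_act (theta \<beta> c) \<beta> = t_star c \<beta>"
proof -
  have ex: "\<exists>!l. (\<exists>\<sigma>. \<sigma> permutes {..<length \<beta>} \<and> l = perm_act \<sigma> \<beta>) \<and> sorted_wrt (\<lambda>A B. Dc c A \<subseteq> Dc c B) l"
    by (rule tstar_ex1[OF assms])
  have "(\<exists>\<sigma>. \<sigma> permutes {..<length \<beta>} \<and> t_star c \<beta> = perm_act \<sigma> \<beta>)"
    using theI'[OF ex] unfolding t_star_def by blast
  then have ex2: "\<exists>!\<sigma>. \<sigma> permutes {..<length \<beta>} \<and> perm_act \<sigma> \<beta> = t_star c \<beta>"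
    using perm_unique[OF assms(1)] perm_act_eq by metis
  show "theta \<beta> c permutes {..<length \<beta>}" "perm_act (theta \<beta> c) \<beta> = t_star c \<beta>"
    using theI'[OF ex2] unfolding theta_def by blast+
qed

lemma theta_cong:
  assumes "\<forall>x\<in>set \<beta>. \<forall>y\<in>set \<beta>. (Dc c x \<subseteq> Dc c y) = (Dc c' x \<subseteq> Dc c' y)"
  shows "theta \<beta> c = theta \<beta> c'"
proof -
  have "\<And>l. ((\<exists>\<sigma>. \<sigma> permutes {..<length \<beta>} \<and> l = perm_act \<sigma> \<beta>) \<and> sorted_wrt (\<lambda>A B. Dc c A \<subseteq> Dc c B) l)
     = ((\<exists>\<sigma>. \<sigma> permutes {..<length \<beta>} \<and> l = perm_act \<sigma> \<beta>) \<and> sorted_wrt (\<lambda>A B. Dc c' A \<subseteq> Dc c' B) l)"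
  proof (intro iffI conjI; elim conjE exE)
    fix l \<sigma> assume "\<sigma> permutes {..<length \<beta>}" "l = perm_act \<sigma> \<beta>"
    then have sl: "set l = set \<beta>" by (simp add: perm_act_eq)
    { assume "sorted_wrt (\<lambda>A B. Dc c A \<subseteq> Dc c B) l"
      then show "sorted_wrt (\<lambda>A B. Dc c' A \<subseteq> Dc c' B) l"
        by (rule sorted_wrt_mono_rel[rotated]) (use assms sl in blast) }
    { assume "sorted_wrt (\<lambda>A B. Dc c' A \<subseteq> Dc c' B) l"
      then show "sorted_wrt (\<lambda>A B. Dc c A \<subseteq> Dc c B) l"
        by (rule sorted_wrt_mono_rel[rotated]) (use assms sl in blast) }
  qed blast+
  then have "t_star c \<beta> = t_star c' \<beta>" unfolding t_star_def by simp
  then show ?thesis unfolding theta_def by simp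
qed


lemma Dk_props:
  assumes "\<beta> \<in> Dk X k"
  shows "length \<beta> = k" "distinct \<beta>"
    "\<And>B. B \<in> set \<beta> \<Longrightarrow> openin X B \<and> closedin X B \<and> B \<noteq> {}"
    "\<And>A B. A \<in> set \<beta> \<Longrightarrow> B \<in> set \<beta> \<Longrightarrow> A \<noteq> B \<Longrightarrow> A \<inter> B = {}"
    "\<Union>(set \<beta>) = topspace X"
proof -
  have D: "length \<beta> = k" "\<forall>i<k. openin X (\<beta>!i) \<and> closedin X (\<beta>!i) \<and> \<beta>!i \<noteq> {}"
     "\<forall>i<k. \<forall>j<k. i \<noteq> j \<longrightarrow> \<beta>!i \<inter> \<beta>!j = {}" "\<Union>(set \<beta>) = topspace X"
    using assms unfolding Dk_def by auto
  show "length \<beta> = k" "\<Union>(set \<beta>) = topspace X" using D by auto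
  show "\<And>B. B \<in> set \<beta> \<Longrightarrow> openin X B \<and> closedin X B \<and> B \<noteq> {}"
    using D by (auto simp: in_set_conv_nth)
  show "\<And>A B. A \<in> set \<beta> \<Longrightarrow> B \<in> set \<beta> \<Longrightarrow> A \<noteq> B \<Longrightarrow> A \<inter> B = {}"
    using D by (auto simp: in_set_conv_nth) 
  show "distinct \<beta>"
    unfolding distinct_conv_nth
  proof (intro allI impI)
    fix i j assume "i < length \<beta>" "j < length \<beta>" "i \<noteq> j"
    then show "\<beta> ! i \<noteq> \<beta> ! j" using D by fastforce
  qed
qed

lemma order_facts:
  assumes "compact_space X" "c \<in> Phi X" "topspace X \<noteq> {}" "\<beta> \<in> Dk X k"
  shows "\<forall>x\<in>set \<beta>. \<forall>y\<in>set \<beta>. Dc c x \<subseteq> Dc c y \<or> Dc c y \<subseteq> Dc c x"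
    "\<forall>x\<in>set \<beta>. \<forall>y\<in>set \<beta>. Dc c x = Dc c y \<longrightarrow> x = y"
    "\<forall>x\<in>set \<beta>. \<forall>y\<in>set \<beta>. (Dc c x \<subseteq> Dc c y) = (\<not>(\<exists>E\<in>c. E \<inter> y \<noteq> {} \<and> E \<inter> x = {}))"
proof -
  note ch = Phi_D(2)[OF assms(2)]
  have top: "topspace X \<in> c" using Phi_top assms by blast
  have M: "Dc c B \<inter> B \<noteq> {}" "closedin X (Dc c B)" if "B \<in> set \<beta>" for B
    using Dc_meets[OF assms(1) Phi_D(1)[OF assms(2)] ch top] Dk_props(3)[OF assms(4) that] by auto
  show "\<forall>x\<in>set \<beta>. \<forall>y\<in>set \<beta>. Dc c x \<subseteq> Dc c y \<or> Dc c y \<subseteq> Dc c x"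
    by (intro ballI Dc_linear[OF ch])
  show "\<forall>x\<in>set \<beta>. \<forall>y\<in>set \<beta>. (Dc c x \<subseteq> Dc c y) = (\<not>(\<exists>E\<in>c. E \<inter> y \<noteq> {} \<and> E \<inter> x = {}))"
    by (intro ballI Dc_le_iff[OF ch M(1)])
  show "\<forall>x\<in>set \<beta>. \<forall>y\<in>set \<beta>. Dc c x = Dc c y \<longrightarrow> x = y"
  proof (intro ballI impI)
    fix x y assume xy: "x \<in> set \<beta>" "y \<in> set \<beta>" "Dc c x = Dc c y"
    show "x = y"
    proof (rule ccontr)
      assume "x \<noteq> y"
      then have "x \<inter> y = {}" using Dk_props(4)[OF assms(4)] xy by blast
      then have "Dc c x \<noteq> Dc c y"
        using Dc_distinct[OF assms(2) _ \<open>x \<inter> y = {}\<close> M(1)[OF xy(1)] M(1)[OF xy(2)] M(2)[OF xy(1)]]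
          Dk_props(3)[OF assms(4) xy(1)] by blast
      then show False using xy by blast
    qed
  qed
qed

lemma theta_good:
  assumes "compact_space X" "c \<in> Phi X" "topspace X \<noteq> {}" "\<beta> \<in> Dk X k"
  shows "theta \<beta> c permutes {..<k}" "perm_act (theta \<beta> c) \<beta> = t_star c \<beta>"
  using theta_props[OF Dk_props(2)[OF assms(4)] order_facts(1,2)[OF assms]] Dk_props(1)[OF assms(4)]
  by auto

lemma topspace_vietoris: "topspace (vietoris Y) = Exp Y"
proof -
  have "Exp Y = {A \<in> Exp Y. A \<subseteq> topspace Y}" unfolding Exp_def by (auto dest: closedin_subset)
  then show ?thesis unfolding vietoris_def topology_generated_by_topspace by blast
qed

lemma open_hit: "openin Y U \<Longrightarrow> openin (vietoris Y) {A \<in> Exp Y. A \<inter> U \<noteq> {}}"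
  unfolding vietoris_def openin_topology_generated_by_iff
  by (rule generate_topology_on.Basis) blast

lemma open_sub: "openin Y U \<Longrightarrow> openin (vietoris Y) {A \<in> Exp Y. A \<subseteq> U}"
  unfolding vietoris_def openin_topology_generated_by_iff
  by (rule generate_topology_on.Basis) blast

lemma topspace_Phi_top: "topspace (Phi_top X) = Phi X"
proof -
  have "Phi X \<subseteq> Exp (vietoris X)" unfolding Phi_def by blast
  then show ?thesis unfolding Phi_top_def topspace_subtopology topspace_vietoris by blast
qed

lemma open_S:
  assumes "openin X B'" "closedin X B"
  shows "openin (Phi_top X) {c \<in> Phi X. \<exists>E\<in>c. E \<inter> B' \<noteq> {} \<and> E \<inter> B = {}}"
proof -
  define W where "W = {A \<in> Exp X. A \<inter> B' \<noteq> {}} \<inter> {A \<in> Exp X. A \<subseteq> topspace X - B}"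
  have W: "openin (vietoris X) W" unfolding W_def
    by (rule openin_Int[OF open_hit[OF assms(1)] open_sub[OF openin_diff[OF openin_topspace assms(2)]]])
  have "openin (Phi_top X) (Phi X \<inter> {c \<in> Exp (vietoris X). c \<inter> W \<noteq> {}})"
    unfolding Phi_top_def by (rule openin_subtopology_Int2[OF open_hit[OF W]])
  moreover have "Phi X \<inter> {c \<in> Exp (vietoris X). c \<inter> W \<noteq> {}} = {c \<in> Phi X. \<exists>E\<in>c. E \<inter> B' \<noteq> {} \<and> E \<inter> B = {}}"
  proof (rule set_eqI)
    fix c
    show "(c \<in> Phi X \<inter> {c \<in> Exp (vietoris X). c \<inter> W \<noteq> {}}) = (c \<in> {c \<in> Phi X. \<exists>E\<in>c. E \<inter> B' \<noteq> {} \<and> E \<inter> B = {}})"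
    proof (cases "c \<in> Phi X")
      case True
      have cE: "c \<in> Exp (vietoris X)" using True unfolding Phi_def by blast
      have sub: "\<And>E. E \<in> c \<Longrightarrow> E \<in> Exp X \<and> E \<subseteq> topspace X"
        using Phi_D(1)[OF True] unfolding Exp_def by (blast dest: closedin_subset)
      have "(c \<inter> W \<noteq> {}) = (\<exists>E\<in>c. E \<inter> B' \<noteq> {} \<and> E \<inter> B = {})"
      proof
        assume "c \<inter> W \<noteq> {}"
        then obtain E where "E \<in> c" "E \<in> W" by blast
        then show "\<exists>E\<in>c. E \<inter> B' \<noteq> {} \<and> E \<inter> B = {}" unfolding W_def by blast
      next
        assume "\<exists>E\<in>c. E \<inter> B' \<noteq> {} \<and> E \<inter> B = {}"
        then obtain E where E: "E \<in> c" "E \<inter> B' \<noteq> {}" "E \<inter> B = {}" by blast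
        then have "E \<in> W" unfolding W_def using sub[OF E(1)] by blast
        then show "c \<inter> W \<noteq> {}" using E(1) by blast
      qed
      then show ?thesis using True cE by simp
    qed simp
  qed
  ultimately show ?thesis by simp
qed

lemma open_R:
  assumes "compact_space X" "topspace X \<noteq> {}" "\<beta> \<in> Dk X k" "x \<in> set \<beta>" "y \<in> set \<beta>"
  shows "openin (Phi_top X) {c \<in> Phi X. Dc c x \<subseteq> Dc c y}"
    "openin (Phi_top X) {c \<in> Phi X. \<not> Dc c x \<subseteq> Dc c y}"
proof -
  have S: "openin (Phi_top X) {c \<in> Phi X. \<not> Dc c a \<subseteq> Dc c b}" if "a \<in> set \<beta>" "b \<in> set \<beta>" for a b
  proof -
    have "\<And>c. c \<in> Phi X \<Longrightarrow> (\<not> Dc c a \<subseteq> Dc c b) = (\<exists>E\<in>c. E \<inter> b \<noteq> {} \<and> E \<inter> a = {})"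
    proof -
      fix c assume c: "c \<in> Phi X"
      show "(\<not> Dc c a \<subseteq> Dc c b) = (\<exists>E\<in>c. E \<inter> b \<noteq> {} \<and> E \<inter> a = {})"
        using order_facts(3)[OF assms(1) c assms(2,3), rule_format, OF that] by (simp only: not_not)
    qed
    then have eq: "{c \<in> Phi X. \<not> Dc c a \<subseteq> Dc c b} = {c \<in> Phi X. \<exists>E\<in>c. E \<inter> b \<noteq> {} \<and> E \<inter> a = {}}"
      by (intro Collect_cong conj_cong refl) simp
    have "openin X b" "closedin X a" using Dk_props(3)[OF assms(3)] that by auto
    then show ?thesis unfolding eq by (rule open_S)
  qed
  show "openin (Phi_top X) {c \<in> Phi X. \<not> Dc c x \<subseteq> Dc c y}" by (rule S[OF assms(4,5)])
  show "openin (Phi_top X) {c \<in> Phi X. Dc c x \<subseteq> Dc c y}"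
  proof (cases "x = y")
    case True
    then have "{c \<in> Phi X. Dc c x \<subseteq> Dc c y} = topspace (Phi_top X)" by (simp add: topspace_Phi_top)
    then show ?thesis by simp
  next
    case False
    have "\<And>c. c \<in> Phi X \<Longrightarrow> (Dc c x \<subseteq> Dc c y) = (\<not> Dc c y \<subseteq> Dc c x)"
    proof -
      fix c assume c: "c \<in> Phi X"
      have "Dc c x \<subseteq> Dc c y \<or> Dc c y \<subseteq> Dc c x"
        using order_facts(1)[OF assms(1) c assms(2,3)] assms(4,5) by simp
      moreover have "Dc c x \<noteq> Dc c y"
        using order_facts(2)[OF assms(1) c assms(2,3), rule_format, OF assms(4,5)] False by metis
      ultimately show "(Dc c x \<subseteq> Dc c y) = (\<not> Dc c y \<subseteq> Dc c x)" by (metis subset_antisym)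
    qed
    then have "{c \<in> Phi X. Dc c x \<subseteq> Dc c y} = {c \<in> Phi X. \<not> Dc c y \<subseteq> Dc c x}"
      by (intro Collect_cong conj_cong refl) simp
    then show ?thesis using S[OF assms(5,4)] by simp
  qed
qed

lemma continuity:
  assumes "compact_space X" "topspace X \<noteq> {}"
    "\<And>\<sigma>. \<sigma> permutes {..<k} \<Longrightarrow> T \<sigma> \<in> {1, -1}"
  shows "continuous_map (Phi_top X) (Omega_top X k) (phi_T X k T)"
  unfolding Omega_top_def continuous_map_componentwise
proof (intro conjI ballI)
  show "phi_T X k T ` topspace (Phi_top X) \<subseteq> extensional (Dk X k)"
    unfolding phi_T_def by auto
next
  fix \<beta> assume b: "\<beta> \<in> Dk X k"
  show "continuous_map (Phi_top X) (discrete_topology {1, -1}) (\<lambda>c. phi_T X k T c \<beta>)"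
    unfolding continuous_map_openin_preimage_eq
  proof (intro conjI allI impI)
    show "(\<lambda>c. phi_T X k T c \<beta>) \<in> topspace (Phi_top X) \<rightarrow> topspace (discrete_topology {1, -1})"
      using theta_good(1)[OF assms(1) _ assms(2) b] assms(3) b
      by (auto simp: topspace_Phi_top phi_T_def)
  next
    fix U :: "int set"
    show "openin (Phi_top X) (topspace (Phi_top X) \<inter> (\<lambda>c. phi_T X k T c \<beta>) -` U)"
    proof (subst openin_subopen, intro ballI)
      fix c0 assume c0: "c0 \<in> topspace (Phi_top X) \<inter> (\<lambda>c. phi_T X k T c \<beta>) -` U"
      define Fam where "Fam = (\<lambda>(x,y). if Dc c0 x \<subseteq> Dc c0 y then {c \<in> Phi X. Dc c x \<subseteq> Dc c y}
                             else {c \<in> Phi X. \<not> Dc c x \<subseteq> Dc c y}) ` (set \<beta> \<times> set \<beta>)"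
      define V where "V = Phi X \<inter> \<Inter>Fam"
      have "openin (Phi_top X) V" unfolding V_def
      proof (rule openin_Int_Inter)
        show "finite Fam" unfolding Fam_def by simp
        show "openin (Phi_top X) (Phi X)" using topspace_Phi_top openin_topspace by metis
        fix Y assume "Y \<in> Fam"
        then show "openin (Phi_top X) Y" unfolding Fam_def using open_R[OF assms(1,2) b] by auto
      qed
      moreover have "c0 \<in> V" using c0 unfolding V_def Fam_def by (auto simp: topspace_Phi_top)
      moreover have "V \<subseteq> topspace (Phi_top X) \<inter> (\<lambda>c. phi_T X k T c \<beta>) -` U"
      proof
        fix c assume c: "c \<in> V"
        then have "\<forall>x\<in>set \<beta>. \<forall>y\<in>set \<beta>. (Dc c x \<subseteq> Dc c y) = (Dc c0 x \<subseteq> Dc c0 y)"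
          unfolding V_def Fam_def by (auto split: if_splits)
        then have "theta \<beta> c = theta \<beta> c0" by (rule theta_cong)
        then show "c \<in> topspace (Phi_top X) \<inter> (\<lambda>c. phi_T X k T c \<beta>) -` U"
          using c c0 b unfolding V_def by (auto simp: topspace_Phi_top phi_T_def)
      qed
      ultimately show "\<exists>V'. openin (Phi_top X) V' \<and> c0 \<in> V' \<and> V' \<subseteq> topspace (Phi_top X) \<inter> (\<lambda>c. phi_T X k T c \<beta>) -` U"
        by blast
    qed
  qed
qed


lemma hm_inv:
  assumes "homeomorphic_map X Y f"
  shows "homeomorphic_maps X Y f (inv_into (topspace X) f)"
proof -
  have L: "continuous_map X Y f" "open_map X Y f" "closed_map X Y f"
    "f ` (topspace X) = topspace Y" "inj_on f (topspace X)"
    using assms by (auto simp: homeomorphic_eq_everything_map)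
  have X: "\<And>x. x \<in> topspace X \<Longrightarrow> f x \<in> topspace Y \<and> inv_into (topspace X) f (f x) = x"
    using L by auto
  have Y: "\<And>y. y \<in> topspace Y \<Longrightarrow> inv_into (topspace X) f y \<in> topspace X \<and> f (inv_into (topspace X) f y) = y"
    by (simp add: L f_inv_into_f inv_into_into)
  show "homeomorphic_maps X Y f (inv_into (topspace X) f)"
    unfolding homeomorphic_maps_def
  proof (intro conjI L)
    show "continuous_map Y X (inv_into (topspace X) f)"
      by (simp add: L X Y flip: open_eq_continuous_inverse_map [where f=f])
  next
    show "\<forall>x\<in>topspace X. inv_into (topspace X) f (f x) = x"
         "\<forall>y\<in>topspace Y. f (inv_into (topspace X) f y) = y"
      using X Y by auto
  qed
qed

lemma img_sub_iff:
  assumes "inj_on f C" "A \<subseteq> C" "B \<subseteq> C"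
  shows "(f ` A \<subseteq> f ` B) = (A \<subseteq> B)"
proof
  assume le: "f ` A \<subseteq> f ` B"
  show "A \<subseteq> B"
  proof
    fix x assume "x \<in> A"
    then have "f x \<in> f ` B" using le by blast
    then show "x \<in> B" using inj_on_image_mem_iff[OF assms(1) _ assms(3)] \<open>x \<in> A\<close> assms(2) by blast
  qed
qed (rule image_mono)

lemma Dc_act:
  assumes "inj_on g (topspace X)" "c \<in> Phi X" "topspace X \<in> c" "A \<subseteq> topspace X" "A \<noteq> {}"
  shows "Dc (act_chain g c) (g ` A) = g ` Dc c A" "Dc c A \<subseteq> topspace X"
proof -
  have cP: "\<And>F. F \<in> c \<Longrightarrow> F \<subseteq> topspace X"
    using Phi_D(1)[OF assms(2)] unfolding Exp_def by (blast dest: closedin_subset)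
  define P where "P = {F \<in> c. F \<inter> A \<noteq> {}}"
  have tP: "topspace X \<in> P" using assms(3-5) unfolding P_def by blast
  have ac: "act_chain g c = (\<lambda>F. g ` F) ` c" unfolding act_chain_def by blast
  have H: "\<And>F. F \<in> c \<Longrightarrow> (g ` F \<inter> g ` A \<noteq> {}) = (F \<inter> A \<noteq> {})"
    using inj_on_image_Int[OF assms(1) cP assms(4)] by (metis image_is_empty)
  have fam: "{E \<in> act_chain g c. E \<inter> g ` A \<noteq> {}} = (\<lambda>F. g ` F) ` P"
  proof (rule set_eqI, rule iffI)
    fix E assume "E \<in> {E \<in> act_chain g c. E \<inter> g ` A \<noteq> {}}"
    then obtain F where F: "F \<in> c" "E = g ` F" "E \<inter> g ` A \<noteq> {}" unfolding ac by auto
    then have "F \<in> P" using H[OF F(1)] unfolding P_def by simp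
    then show "E \<in> (\<lambda>F. g ` F) ` P" using F(2) by (rule rev_image_eqI)
  next
    fix E assume "E \<in> (\<lambda>F. g ` F) ` P"
    then obtain F where F: "F \<in> P" "E = g ` F" by (rule imageE) 
    then have "F \<in> c" "F \<inter> A \<noteq> {}" unfolding P_def by auto
    then show "E \<in> {E \<in> act_chain g c. E \<inter> g ` A \<noteq> {}}" using H F(2) unfolding ac by auto
  qed
  have "g ` (\<Inter>((\<lambda>x. x) ` P)) = (\<Inter>x\<in>P. g ` x)"
    by (rule image_INT[OF assms(1) _ tP]) (use cP P_def in blast)
  then show "Dc (act_chain g c) (g ` A) = g ` Dc c A"
    unfolding Dc_def fam P_def[symmetric] by simp
  show "Dc c A \<subseteq> topspace X" unfolding Dc_def P_def[symmetric] using tP by blast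
qed

lemma tstar_good:
  assumes "distinct \<beta>" "\<forall>x\<in>set \<beta>. \<forall>y\<in>set \<beta>. Dc c x \<subseteq> Dc c y \<or> Dc c y \<subseteq> Dc c x"
    "\<forall>x\<in>set \<beta>. \<forall>y\<in>set \<beta>. Dc c x = Dc c y \<longrightarrow> x = y"
  shows "(\<exists>\<sigma>. \<sigma> permutes {..<length \<beta>} \<and> t_star c \<beta> = perm_act \<sigma> \<beta>) \<and> sorted_wrt (\<lambda>A B. Dc c A \<subseteq> Dc c B) (t_star c \<beta>)"
    "\<And>l. (\<exists>\<sigma>. \<sigma> permutes {..<length \<beta>} \<and> l = perm_act \<sigma> \<beta>) \<and> sorted_wrt (\<lambda>A B. Dc c A \<subseteq> Dc c B) l \<Longrightarrow> l = t_star c \<beta>"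
proof -
  have ex: "\<exists>!l. (\<exists>\<sigma>. \<sigma> permutes {..<length \<beta>} \<and> l = perm_act \<sigma> \<beta>) \<and> sorted_wrt (\<lambda>A B. Dc c A \<subseteq> Dc c B) l"
    by (rule tstar_ex1[OF assms])
  show 1: "(\<exists>\<sigma>. \<sigma> permutes {..<length \<beta>} \<and> t_star c \<beta> = perm_act \<sigma> \<beta>) \<and> sorted_wrt (\<lambda>A B. Dc c A \<subseteq> Dc c B) (t_star c \<beta>)"
    using theI'[OF ex] unfolding t_star_def by blast
  fix l assume "(\<exists>\<sigma>. \<sigma> permutes {..<length \<beta>} \<and> l = perm_act \<sigma> \<beta>) \<and> sorted_wrt (\<lambda>A B. Dc c A \<subseteq> Dc c B) l"
  then show "l = t_star c \<beta>" unfolding t_star_def by (rule the1_equality[OF ex, symmetric])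
qed

lemma equivariance:
  assumes cp: "compact_space X" and ne: "topspace X \<noteq> {}" and hg: "homeomorphic_map X X g"
    and c: "c \<in> Phi X" and b: "\<beta> \<in> Dk X k"
  shows "act_D (inv_into (topspace X) g) \<beta> \<in> Dk X k"
    "theta \<beta> (act_chain g c) = theta (act_D (inv_into (topspace X) g) \<beta>) c"
proof -
  define h where "h = inv_into (topspace X) g"
  have hm: "homeomorphic_maps X X g h" unfolding h_def by (rule hm_inv[OF hg])
  have hh: "homeomorphic_map X X h" using hm unfolding homeomorphic_maps_map by simp
  have gh: "\<And>y. y \<in> topspace X \<Longrightarrow> g (h y) = y" using hm unfolding homeomorphic_maps_map by simp
  have injg: "inj_on g (topspace X)" by (rule homeomorphic_imp_injective_map[OF hg])
  have injh: "inj_on h (topspace X)" by (rule homeomorphic_imp_injective_map[OF hh])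
  have surjh: "h ` topspace X = topspace X" by (rule homeomorphic_imp_surjective_map[OF hh])
  have om: "open_map X X h" "closed_map X X h"
    using homeomorphic_imp_open_map[OF hh] homeomorphic_imp_closed_map[OF hh] by auto
  define \<beta>' where "\<beta>' = act_D h \<beta>"
  note bp = Dk_props[OF b]
  have bsub: "\<And>B. B \<in> set \<beta> \<Longrightarrow> B \<subseteq> topspace X" by (meson bp(3) openin_subset)
  show b': "act_D (inv_into (topspace X) g) \<beta> \<in> Dk X k"
    unfolding h_def[symmetric] Dk_def
  proof (intro CollectI conjI allI impI)
    show "length (act_D h \<beta>) = k" using bp(1) by (simp add: act_D_def)
    fix i assume i: "i < k"
    then have bi: "\<beta> ! i \<in> set \<beta>" using bp(1) by simp
    have eq: "act_D h \<beta> ! i = h ` (\<beta> ! i)" using i bp(1) by (simp add: act_D_def)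
    show "openin X (act_D h \<beta> ! i)" using om(1) bp(3)[OF bi] unfolding eq open_map_def by blast
    show "closedin X (act_D h \<beta> ! i)" using om(2) bp(3)[OF bi] unfolding eq closed_map_def by blast
    show "act_D h \<beta> ! i \<noteq> {}" using bp(3)[OF bi] unfolding eq by blast
    fix j assume j: "j < k" "i \<noteq> j"
    then have bj: "\<beta> ! j \<in> set \<beta>" using bp(1) by simp
    have "\<beta> ! i \<noteq> \<beta> ! j" using bp(2) bp(1) i j nth_eq_iff_index_eq by blast
    then have "\<beta> ! i \<inter> \<beta> ! j = {}" using bp(4)[OF bi bj] by blast
    moreover have eqj: "act_D h \<beta> ! j = h ` (\<beta> ! j)" using j bp(1) by (simp add: act_D_def)
    ultimately show "act_D h \<beta> ! i \<inter> act_D h \<beta> ! j = {}"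
      unfolding eq eqj using inj_on_image_Int[OF injh bsub[OF bi] bsub[OF bj]] by simp
  next
    have "\<Union> (set (act_D h \<beta>)) = h ` \<Union>(set \<beta>)" by (auto simp: act_D_def)
    then show "\<Union> (set (act_D h \<beta>)) = topspace X" using bp(5) surjh by simp
  qed
  then have b'D: "\<beta>' \<in> Dk X k" unfolding \<beta>'_def h_def .
  note bp' = Dk_props[OF b'D]
  have b'sub: "\<And>B. B \<in> set \<beta>' \<Longrightarrow> B \<subseteq> topspace X" by (meson bp'(3) openin_subset)
  have bb: "\<beta> = act_D g \<beta>'"
  proof -
    have "\<And>B. B \<in> set \<beta> \<Longrightarrow> g ` h ` B = B"
    proof -
      fix B assume "B \<in> set \<beta>"
      then have "\<And>y. y \<in> B \<Longrightarrow> g (h y) = y" using bsub gh by blast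
      then show "g ` h ` B = B" by (simp add: image_image)
    qed
    then show ?thesis unfolding \<beta>'_def act_D_def by (simp add: map_idI)
  qed
  have top: "topspace X \<in> c" using Phi_top[OF c ne] .
  note of = order_facts[OF cp c ne b'D]
  define \<sigma>0 where "\<sigma>0 = theta \<beta>' c"
  define l0 where "l0 = t_star c \<beta>'"
  have s0: "\<sigma>0 permutes {..<k}" "perm_act \<sigma>0 \<beta>' = l0"
    using theta_good[OF cp c ne b'D] unfolding \<sigma>0_def l0_def by auto
  have len: "length \<beta> = k" "length \<beta>' = k" using bp(1) bp'(1) by auto
  note tg = tstar_good[OF bp'(2) of(1,2), folded l0_def]
  have R: "\<And>x y. x \<in> set \<beta>' \<Longrightarrow> y \<in> set \<beta>' \<Longrightarrow>
      (Dc (act_chain g c) (g ` x) \<subseteq> Dc (act_chain g c) (g ` y)) = (Dc c x \<subseteq> Dc c y)"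
  proof -
    fix x y assume xy: "x \<in> set \<beta>'" "y \<in> set \<beta>'"
    have nx: "x \<noteq> {}" "y \<noteq> {}" using bp'(3) xy by auto
    show "(Dc (act_chain g c) (g ` x) \<subseteq> Dc (act_chain g c) (g ` y)) = (Dc c x \<subseteq> Dc c y)"
      using Dc_act[OF injg c top b'sub[OF xy(1)] nx(1)] Dc_act[OF injg c top b'sub[OF xy(2)] nx(2)]
        img_sub_iff[OF injg] by simp
  qed
  have pm: "\<And>\<sigma>. \<sigma> permutes {..<k} \<Longrightarrow> perm_act \<sigma> \<beta> = map ((`) g) (perm_act \<sigma> \<beta>')"
    unfolding perm_act_eq bb act_D_def using len by (simp add: permute_list_map)
  have sortiff: "\<And>\<sigma>. \<sigma> permutes {..<k} \<Longrightarrow>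
      sorted_wrt (\<lambda>A B. Dc (act_chain g c) A \<subseteq> Dc (act_chain g c) B) (map ((`) g) (perm_act \<sigma> \<beta>'))
      = sorted_wrt (\<lambda>A B. Dc c A \<subseteq> Dc c B) (perm_act \<sigma> \<beta>')"
  proof -
    fix \<sigma> assume sp: "\<sigma> permutes {..<k}"
    have st: "set (perm_act \<sigma> \<beta>') = set \<beta>'" using sp len by (simp add: perm_act_eq)
    show "?thesis \<sigma>" unfolding sorted_wrt_map
    proof
      assume "sorted_wrt (\<lambda>x y. Dc (act_chain g c) (g ` x) \<subseteq> Dc (act_chain g c) (g ` y)) (perm_act \<sigma> \<beta>')"
      then show "sorted_wrt (\<lambda>A B. Dc c A \<subseteq> Dc c B) (perm_act \<sigma> \<beta>')"
        by (rule sorted_wrt_mono_rel[rotated]) (use R st in auto)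
    next
      assume "sorted_wrt (\<lambda>A B. Dc c A \<subseteq> Dc c B) (perm_act \<sigma> \<beta>')"
      then show "sorted_wrt (\<lambda>x y. Dc (act_chain g c) (g ` x) \<subseteq> Dc (act_chain g c) (g ` y)) (perm_act \<sigma> \<beta>')"
        by (rule sorted_wrt_mono_rel[rotated]) (use R st in auto)
    qed
  qed
  have ts: "t_star (act_chain g c) \<beta> = map ((`) g) l0"
    unfolding t_star_def
  proof (rule the_equality)
    show "(\<exists>\<sigma>. \<sigma> permutes {..<length \<beta>} \<and> map ((`) g) l0 = perm_act \<sigma> \<beta>) \<and>
      sorted_wrt (\<lambda>A B. Dc (act_chain g c) A \<subseteq> Dc (act_chain g c) B) (map ((`) g) l0)"
      using s0 pm[OF s0(1)] sortiff[OF s0(1)] tg(1) len by auto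
  next
    fix l assume l: "(\<exists>\<sigma>. \<sigma> permutes {..<length \<beta>} \<and> l = perm_act \<sigma> \<beta>) \<and>
      sorted_wrt (\<lambda>A B. Dc (act_chain g c) A \<subseteq> Dc (act_chain g c) B) l"
    then obtain \<sigma> where sg: "\<sigma> permutes {..<k}" "l = perm_act \<sigma> \<beta>" using len by auto
    have "sorted_wrt (\<lambda>A B. Dc c A \<subseteq> Dc c B) (perm_act \<sigma> \<beta>')"
      using l sg pm[OF sg(1)] sortiff[OF sg(1)] by simp
    then have "perm_act \<sigma> \<beta>' = l0" using tg(2) sg(1) len by auto
    then show "l = map ((`) g) l0" using sg pm by simp
  qed
  have injm: "inj_on ((`) g) (Pow (topspace X))" by (rule inj_on_image_Pow[OF injg])
  have "theta \<beta> (act_chain g c) = \<sigma>0"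
    unfolding theta_def
  proof (rule the_equality)
    show "\<sigma>0 permutes {..<length \<beta>} \<and> perm_act \<sigma>0 \<beta> = t_star (act_chain g c) \<beta>"
      using s0 pm[OF s0(1)] ts len by simp
  next
    fix \<sigma> assume sg: "\<sigma> permutes {..<length \<beta>} \<and> perm_act \<sigma> \<beta> = t_star (act_chain g c) \<beta>"
    then have sp: "\<sigma> permutes {..<k}" using len by simp
    have "map ((`) g) (perm_act \<sigma> \<beta>') = map ((`) g) (perm_act \<sigma>0 \<beta>')"
      using sg pm[OF sp] ts s0 by simp
    moreover have "inj_on ((`) g) (set (perm_act \<sigma> \<beta>') \<union> set (perm_act \<sigma>0 \<beta>'))"
      using sp s0(1) len b'sub by (intro inj_on_subset[OF injm]) (auto simp: perm_act_eq)
    ultimately have "perm_act \<sigma> \<beta>' = perm_act \<sigma>0 \<beta>'" by (rule map_inj_on)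
    then show "\<sigma> = \<sigma>0" using perm_unique[OF bp'(2)] sp s0(1) len by (simp add: perm_act_eq)
  qed
  then show "theta \<beta> (act_chain g c) = theta (act_D (inv_into (topspace X) g) \<beta>) c"
    unfolding \<sigma>0_def \<beta>'_def h_def .
qed

theorem lemma4p8:
  fixes X :: "'a topology" and k :: nat and T :: "(nat \<Rightarrow> nat) \<Rightarrow> int"
  assumes "infinite (topspace X)"
    and "h_homogeneous X"
    and "X dim_le 0"
    and "compact_space X"
    and "Hausdorff_space X"
    and "k \<ge> 1"
    and "\<And>\<sigma>. \<sigma> permutes {..<k} \<Longrightarrow> T \<sigma> \<in> {1, -1}"
  shows "continuous_map (Phi_top X) (Omega_top X k) (phi_T X k T)
     \<and> (\<forall>g c. homeomorphic_map X X g \<and> c \<in> Phi X \<longrightarrow>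
            phi_T X k T (act_chain g c) = act_Omega X k g (phi_T X k T c))"
proof (intro conjI allI impI)
  have ne: "topspace X \<noteq> {}" using assms(1) by auto
  show "continuous_map (Phi_top X) (Omega_top X k) (phi_T X k T)"
    by (rule continuity[OF assms(4) ne assms(7)])
  fix g c assume gc: "homeomorphic_map X X g \<and> c \<in> Phi X"
  show "phi_T X k T (act_chain g c) = act_Omega X k g (phi_T X k T c)"
  proof
    fix \<beta>
    show "phi_T X k T (act_chain g c) \<beta> = act_Omega X k g (phi_T X k T c) \<beta>"
    proof (cases "\<beta> \<in> Dk X k")
      case True
      note e = equivariance[OF assms(4) ne conjunct1[OF gc] conjunct2[OF gc] True]
      show ?thesis using True e by (simp add: phi_T_def act_Omega_def)
    next
      case False
      then show ?thesis by (simp add: phi_T_def act_Omega_def)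
    qed
  qed
qed

end
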